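(* Let $\alpha=\frac{1+\sqrt5}{2}$. For $a\in\mathbb{C}$ with $a\neq 0$ and $|a|<1$, consider the Blaschke product $B_a(z)=z\,\frac{z-a}{1-\overline{a}z}$. There are infinitely many values of $a$ (with $a\neq0$, $|a|<1$) such that there exists a line segment $[z_1,z_2]$ with endpoints $z_1,z_2$ on the unit circle $\partial\mathbb{D}$ which is divided by $a$ in the golden ratio. Furthermore, for a fixed such $a$, the number of line segments with endpoints on the unit circle that are divided by $a$ in the golden ratio is at most two.
   Context: $\mathbb{D}$ denotes the open unit disc and $\partial\mathbb{D}$ the unit circle. The golden ratio is $\alpha=\frac{1+\sqrt5}{2}$, the positive root of $x^2-x-1=0$. A point $a$ on a line segment $[z_1,z_2]$ divides it in the golden ratio if the ratio of the length of the longer part to the length of the shorter part equals $\alpha$, e.g. $\frac{|z_2-a|}{|z_1-a|}=\alpha$. (For any chord $[z_1,z_2]$ of the unit circle through the nonzero zero $a$ of $B_a$ one has $B_a(z_1)=B_a(z_2)$.) *)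

theory Defs
  imports "HOL-Analysis.Analysis"
begin

definition golden_ratio :: real where
  "golden_ratio = (1 + sqrt 5) / 2"

definition blaschke :: "complex \<Rightarrow> complex \<Rightarrow> complex" where
  "blaschke a z = z * (z - a) / (1 - cnj a * z)"

definition golden_divides :: "complex \<Rightarrow> complex \<Rightarrow> complex \<Rightarrow> bool" where
  "golden_divides a z1 z2 \<longleftrightarrow> a \<in> closed_segment z1 z2 \<and>
     (cmod (z2 - a) = golden_ratio * cmod (z1 - a) \<or> cmod (z1 - a) = golden_ratio * cmod (z2 - a))"

definition golden_chords :: "complex \<Rightarrow> complex set set" where
  "golden_chords a = {{z1, z2} | z1 z2. cmod z1 = 1 \<and> cmod z2 = 1 \<and> golden_divides a z1 z2}"

end

theory Submission
  imports Defs
begin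

lemma gr_gt1: "golden_ratio > 1"
proof -
  have "sqrt 5 > 1" by (simp add: real_less_rsqrt)
  thus ?thesis unfolding golden_ratio_def by simp
qed

lemma circle_line:
  "{w::complex. cmod w = 1 \<and> Re w = k} \<subseteq> {Complex k (sqrt (1 - k^2)), Complex k (- sqrt (1 - k^2))}"
proof
  fix w :: complex assume "w \<in> {w. cmod w = 1 \<and> Re w = k}"
  hence h: "cmod w = 1" "Re w = k" by auto
  have "Re w ^ 2 + Im w ^ 2 = 1" using h(1) by (metis cmod_power2 power_one)
  hence "Im w ^ 2 = 1 - k^2" using h(2) by simp
  hence "Im w = sqrt (1 - k^2) \<or> Im w = - sqrt (1 - k^2)"
    by (metis real_sqrt_abs abs_if minus_minus)
  thus "w \<in> {Complex k (sqrt (1 - k^2)), Complex k (- sqrt (1 - k^2))}"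
    using h(2) by (auto simp: complex_eq_iff)
qed

lemma two_circles:
  fixes b :: complex and c :: real
  assumes "b \<noteq> 0"
  shows "finite {z. cmod z = 1 \<and> cmod (z - b) = c} \<and> card {z. cmod z = 1 \<and> cmod (z - b) = c} \<le> 2"
proof -
  define u where "u = b / of_real (cmod b)"
  define k where "k = (1 + cmod b ^ 2 - c ^ 2) / (2 * cmod b)"
  let ?W = "{w::complex. cmod w = 1 \<and> Re w = k}"
  have nb: "cmod b > 0" using assms by simp
  have uu: "u * cnj u = 1" unfolding u_def using nb
    by (simp add: complex_norm_square[symmetric] field_simps power2_eq_square)
  have cu: "cmod u = 1" unfolding u_def using nb by (simp add: norm_divide)
  have sub: "{z. cmod z = 1 \<and> cmod (z - b) = c} \<subseteq> (\<lambda>w. u * w) ` ?W"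
  proof
    fix z assume "z \<in> {z. cmod z = 1 \<and> cmod (z - b) = c}"
    hence z: "cmod z = 1" "cmod (z - b) = c" by auto
    define w where "w = cnj u * z"
    have "u * w = z" unfolding w_def using uu by (metis mult.assoc mult_1)
    moreover have "cmod w = 1" unfolding w_def using z cu by (simp add: norm_mult)
    moreover have "Re w = k"
    proof -
      have e1: "Re z ^ 2 + Im z ^ 2 = 1" using z(1) by (metis cmod_power2 power_one)
      have e2: "(Re z - Re b) ^ 2 + (Im z - Im b) ^ 2 = c ^ 2" using z(2)
        by (metis cmod_power2 minus_complex.simps)
      have e3: "Re b ^ 2 + Im b ^ 2 = cmod b ^ 2" by (simp add: cmod_power2)
      have "Re w = (Re b * Re z + Im b * Im z) / cmod b"
        unfolding w_def u_def by (simp add: add_divide_distrib)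
      also have "Re b * Re z + Im b * Im z = (1 + cmod b ^ 2 - c ^ 2) / 2"
        using e1 e2 e3 by (simp add: power2_diff algebra_simps)
      finally show ?thesis unfolding k_def by simp
    qed
    ultimately show "z \<in> (\<lambda>w. u * w) ` ?W" by auto
  qed
  have fW: "finite ?W" by (rule finite_subset[OF circle_line]) simp
  have cW: "card ?W \<le> 2"
    by (rule order_trans[OF card_mono[OF _ circle_line]]) (simp_all add: card_insert_le_m1)
  show ?thesis
    using sub fW cW
    by (meson card_image_le card_mono finite_imageI finite_subset order_trans)
qed


lemma chords_bound:
  fixes a :: complex
  assumes a0: "a \<noteq> 0" and a1: "cmod a < 1"
  shows "finite (golden_chords a) \<and> card (golden_chords a) \<le> 2"
proof -
  define s where "s = 1 / (1 + golden_ratio)"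
  have g1: "golden_ratio > 1" by (rule gr_gt1)
  have s0: "0 < s" "s < 1" unfolding s_def using g1 by auto
  define b where "b = a / of_real (1 - s)"
  define c where "c = s / (1 - s)"
  define g where "g = (\<lambda>z. (a - of_real (1 - s) * z) / of_real s)"
  let ?Z = "{z. cmod z = 1 \<and> cmod (z - b) = c}"
  have b0: "b \<noteq> 0" unfolding b_def using a0 s0 by simp
  have key: "{z1, z2} \<in> (\<lambda>z. {z, g z}) ` ?Z"
    if z: "cmod z1 = 1" "cmod z2 = 1" and eq: "a = of_real (1 - s) * z1 + of_real s * z2" for z1 z2
  proof -
    have "g z1 = z2" unfolding g_def eq using s0 by (simp add: field_simps)
    moreover have "cmod (z1 - b) = c"
    proof -
      have "z1 - b = - (of_real s * z2) / of_real (1 - s)"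
        unfolding b_def eq using s0 by (simp add: field_simps)
      moreover have "cmod (of_real (1 - s)) = 1 - s" using s0 by (simp del: of_real_diff)
      ultimately show ?thesis unfolding c_def using s0 z by (simp add: norm_divide norm_mult del: of_real_diff)
    qed
    ultimately show ?thesis using z by auto
  qed
  have sub: "golden_chords a \<subseteq> (\<lambda>z. {z, g z}) ` ?Z"
  proof
    fix C assume "C \<in> golden_chords a"
    then obtain z1 z2 where C: "C = {z1, z2}" and z: "cmod z1 = 1" "cmod z2 = 1"
      and gd: "golden_divides a z1 z2" unfolding golden_chords_def by auto
    from gd obtain u where u: "0 \<le> u" "u \<le> 1" and au: "a = (1 - u) *\<^sub>R z1 + u *\<^sub>R z2"
      and gr: "cmod (z2 - a) = golden_ratio * cmod (z1 - a) \<or> cmod (z1 - a) = golden_ratio * cmod (z2 - a)"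
      unfolding golden_divides_def closed_segment_def by auto
    have au': "a = of_real (1 - u) * z1 + of_real u * z2" using au by (simp add: scaleR_conv_of_real)
    have L: "z1 \<noteq> z2"
    proof
      assume "z1 = z2"
      hence "a = z1" using au' by (simp add: algebra_simps flip: distrib_right of_real_add)
      thus False using z a1 by simp
    qed
    define L where "L = cmod (z2 - z1)"
    have Lp: "L > 0" unfolding L_def using L by simp
    have d2: "cmod (z2 - a) = (1 - u) * L"
    proof -
      have "z2 - a = of_real (1 - u) * (z2 - z1)" using au' by (simp add: algebra_simps)
      moreover have "cmod (of_real (1 - u)) = 1 - u" using u by (simp del: of_real_diff)
      ultimately show ?thesis unfolding L_def using u by (simp add: norm_mult del: of_real_diff)
    qed
    have d1: "cmod (z1 - a) = u * L"
    proof -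
      have "z1 - a = of_real u * (z1 - z2)" using au' by (simp add: algebra_simps)
      thus ?thesis unfolding L_def using u by (simp add: norm_mult norm_minus_commute)
    qed
    show "C \<in> (\<lambda>z. {z, g z}) ` ?Z"
      using gr
    proof
      assume "cmod (z2 - a) = golden_ratio * cmod (z1 - a)"
      hence "(1 - u) * L = golden_ratio * u * L" using d1 d2 by simp
      hence "1 - u = golden_ratio * u" using Lp by simp
      hence "u = s" unfolding s_def using g1 by (simp add: field_simps)
      thus ?thesis using key[OF z] au' C by simp
    next
      assume "cmod (z1 - a) = golden_ratio * cmod (z2 - a)"
      hence "u * L = golden_ratio * (1 - u) * L" using d1 d2 by simp
      hence "u = golden_ratio * (1 - u)" using Lp by simp
      hence "1 - u = s" unfolding s_def using g1 by (simp add: field_simps)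
      hence "u = 1 - s" by simp
      hence "a = of_real (1 - s) * z2 + of_real s * z1" using au' by (simp add: add.commute)
      thus ?thesis using key[OF z(2) z(1)] C by (simp add: insert_commute)
    qed
  qed
  have fin: "finite ?Z" "card ?Z \<le> 2" using two_circles[OF b0] by auto
  show ?thesis using sub fin
    by (meson card_image_le card_mono finite_imageI finite_subset order_trans)
qed


lemma infinitely_many:
  "infinite {a :: complex. a \<noteq> 0 \<and> cmod a < 1 \<and>
            (\<exists>z1 z2. cmod z1 = 1 \<and> cmod z2 = 1 \<and> golden_divides a z1 z2)}"
proof -
  define t where "t = (golden_ratio - 1) / (golden_ratio + 1)"
  have g1: "golden_ratio > 1" by (rule gr_gt1)
  have t0: "0 < t" "t < 1" unfolding t_def using g1 by auto
  have tg: "1 + t = golden_ratio * (1 - t)" unfolding t_def using g1 by (simp add: field_simps)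
  have mem: "of_real t * w \<in> {a :: complex. a \<noteq> 0 \<and> cmod a < 1 \<and>
            (\<exists>z1 z2. cmod z1 = 1 \<and> cmod z2 = 1 \<and> golden_divides a z1 z2)}"
    if w: "cmod w = 1" for w
  proof -
    have w0: "w \<noteq> 0" using w by auto
    have "of_real t * w \<in> closed_segment (- w) w"
      unfolding closed_segment_def
    proof (intro CollectI exI conjI)
      show "of_real t * w = (1 - (1 + t) / 2) *\<^sub>R (- w) + ((1 + t) / 2) *\<^sub>R w"
        by (simp add: scaleR_conv_of_real algebra_simps flip: of_real_mult of_real_diff)
          (simp add: field_simps)
    qed (use t0 in auto)
    moreover have "cmod (- w - of_real t * w) = 1 + t"
    proof -
      have "- w - of_real t * w = - (of_real (1 + t) * w)" by (simp add: algebra_simps)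
      thus ?thesis using w t0 by (simp add: norm_mult del: of_real_add)
    qed
    moreover have "cmod (w - of_real t * w) = 1 - t"
    proof -
      have "w - of_real t * w = of_real (1 - t) * w" by (simp add: algebra_simps)
      thus ?thesis using w t0 by (simp add: norm_mult del: of_real_diff)
    qed
    ultimately have "golden_divides (of_real t * w) (- w) w"
      unfolding golden_divides_def using tg by auto
    moreover have "cmod (of_real t * w) < 1" using w t0 by (simp add: norm_mult)
    ultimately show ?thesis using w w0 t0 by (intro CollectI conjI exI[of _ "- w"] exI[of _ w]) auto
  qed
  have inj: "inj_on (\<lambda>x. of_real t * cis x) {0..pi}"
  proof (rule inj_onI)
    fix x y assume xy: "x \<in> {0..pi}" "y \<in> {0..pi}" "of_real t * cis x = of_real t * cis y"
    hence "cis x = cis y" using t0 by simp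
    hence "cos x = cos y" by (metis cis.sel(1))
    thus "x = y" using xy by (auto intro: cos_inj_pi)
  qed
  have "infinite ((\<lambda>x. of_real t * cis x) ` {0..pi})"
    using inj finite_imageD infinite_Icc pi_gt_zero by blast
  moreover have "(\<lambda>x. of_real t * cis x) ` {0..pi} \<subseteq> {a :: complex. a \<noteq> 0 \<and> cmod a < 1 \<and>
            (\<exists>z1 z2. cmod z1 = 1 \<and> cmod z2 = 1 \<and> golden_divides a z1 z2)}"
  proof
    fix y assume "y \<in> (\<lambda>x. of_real t * cis x) ` {0..pi}"
    then obtain x where "y = of_real t * cis x" by auto
    thus "y \<in> {a :: complex. a \<noteq> 0 \<and> cmod a < 1 \<and>
            (\<exists>z1 z2. cmod z1 = 1 \<and> cmod z2 = 1 \<and> golden_divides a z1 z2)}"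
      using mem[of "cis x"] by simp
  qed
  ultimately show ?thesis using finite_subset by blast
qed

theorem theorem1:
  shows "infinite {a :: complex. a \<noteq> 0 \<and> cmod a < 1 \<and>
            (\<exists>z1 z2. cmod z1 = 1 \<and> cmod z2 = 1 \<and> golden_divides a z1 z2)}
     \<and> (\<forall>a :: complex. a \<noteq> 0 \<and> cmod a < 1 \<and>
            (\<exists>z1 z2. cmod z1 = 1 \<and> cmod z2 = 1 \<and> golden_divides a z1 z2)
          \<longrightarrow> finite (golden_chords a) \<and> card (golden_chords a) \<le> 2)"
  using infinitely_many chords_bound by blast

end
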